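(* Let $R$ be a Noetherian commutative ring and $I_1,I_2,I_3\subset R$ ideals; put $J=I_1+I_2+I_3$. Let $k_1,\dots,k_n$ generate $I_3$, let $A=R[x_1,\dots,x_n]$, and let $\pi_1:A\to R/I_1$, $\pi_2:A\to R/I_2$ be the $R$-algebra homomorphisms with $\pi_1(x_j)=k_j$ and $\pi_2(x_j)=0$ for all $j$. Then the pullback (fiber product) in commutative rings of the diagram $R/I_1\to R/J\leftarrow R/I_2$ (natural projections) is isomorphic to $A/(\ker\pi_1\cap\ker\pi_2)$. In particular this pullback is a finitely generated $R$-algebra. *)

theory Defs
  imports "HOL-Algebra.Algebra" "HOL-Library.Poly_Mapping"
begin

definition type_ring :: "('b::comm_ring_1) ring" where
  "type_ring = \<lparr>partial_object.carrier = UNIV, monoid.mult = (*), monoid.one = 1, ring.zero = 0, ring.add = (+)\<rparr>"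

text \<open>Polynomial ring R[x_j : j in 'n] over a type-ring, realised as finitely supported
  maps from monomials (exponent vectors 'n =>0 nat) to coefficients.\<close>
type_synonym ('n, 'b) mpoly = "('n \<Rightarrow>\<^sub>0 nat) \<Rightarrow>\<^sub>0 'b"

definition mpoly_const :: "'b::comm_ring_1 \<Rightarrow> ('n, 'b) mpoly" where
  "mpoly_const c = Poly_Mapping.single 0 c"

definition mpoly_var :: "'n \<Rightarrow> ('n, 'b::comm_ring_1) mpoly" where
  "mpoly_var j = Poly_Mapping.single (Poly_Mapping.single j 1) 1"

text \<open>Natural projection R/I -> R/J (for I a subset of J): a coset X of I is sent to the
  coset of J of any representative of X.\<close>
definition quot_proj :: "('a, 'm) ring_scheme \<Rightarrow> 'a set \<Rightarrow> 'a set \<Rightarrow> 'a set" where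
  "quot_proj S K Y = a_r_coset S K (SOME a. a \<in> Y)"

definition fiber_product ::
  "('a, 'm) ring_scheme \<Rightarrow> ('b, 'n) ring_scheme \<Rightarrow> ('a \<Rightarrow> 'c) \<Rightarrow> ('b \<Rightarrow> 'c) \<Rightarrow> ('a \<times> 'b) ring" where
  "fiber_product A B f g =
     (RDirProd A B)\<lparr>carrier := {(a, b). a \<in> carrier A \<and> b \<in> carrier B \<and> f a = g b}\<rparr>"

definition fg_algebra :: "('a, 'm) ring_scheme \<Rightarrow> ('b, 'n) ring_scheme \<Rightarrow> ('a \<Rightarrow> 'b) \<Rightarrow> bool" where
  "fg_algebra R S phi \<longleftrightarrow>
     (\<exists>F. finite F \<and> F \<subseteq> carrier S \<and> generate_ring S (phi ` carrier R \<union> F) = carrier S)"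

end

theory Submission
  imports Defs
begin

lemma type_ring_simps [simp]:
  "carrier (type_ring :: 'b::comm_ring_1 ring) = UNIV"
  "monoid.mult (type_ring :: 'b::comm_ring_1 ring) = (*)"
  "monoid.one (type_ring :: 'b::comm_ring_1 ring) = 1"
  "ring.zero (type_ring :: 'b::comm_ring_1 ring) = 0"
  "ring.add (type_ring :: 'b::comm_ring_1 ring) = (+)"
  by (simp_all add: type_ring_def)

lemma cring_type_ring: "cring (type_ring :: 'b::comm_ring_1 ring)"
proof (rule cringI)
  show "abelian_group (type_ring :: 'b ring)"
    by (rule abelian_groupI) (simp_all add: add.assoc, metis add.commute ab_left_minus)
  show "Group.comm_monoid (type_ring :: 'b ring)"
    by (rule comm_monoidI) (simp_all add: mult.assoc mult.commute)
  show "\<And>x y z. x \<in> carrier (type_ring :: 'b ring) \<Longrightarrow> y \<in> carrier (type_ring :: 'b ring) \<Longrightarrow> z \<in> carrier (type_ring :: 'b ring) \<Longrightarrow> (x \<oplus>\<^bsub>type_ring\<^esub> y) \<otimes>\<^bsub>type_ring\<^esub> z = x \<otimes>\<^bsub>type_ring\<^esub> z \<oplus>\<^bsub>type_ring\<^esub> y \<otimes>\<^bsub>type_ring\<^esub> z"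
    by (simp add: distrib_right)
qed

lemma type_ring_a_inv [simp]: "a_inv (type_ring :: 'b::comm_ring_1 ring) x = - x"
proof -
  interpret cring "type_ring :: 'b ring" by (rule cring_type_ring)
  show ?thesis by (rule minus_equality) simp_all
qed

lemma type_ring_pow [simp]: "x [^]\<^bsub>(type_ring :: 'b::comm_ring_1 ring)\<^esub> (n::nat) = x ^ n"
  by (induct n) (simp_all add: nat_pow_def mult.commute)

lemma ideal_T:
  assumes "ideal I (type_ring :: 'b::comm_ring_1 ring)"
  shows "0 \<in> I" "\<And>x y. x \<in> I \<Longrightarrow> y \<in> I \<Longrightarrow> x + y \<in> I" "\<And>x. x \<in> I \<Longrightarrow> - x \<in> I"
    "\<And>x r. x \<in> I \<Longrightarrow> r * x \<in> I" "\<And>x r. x \<in> I \<Longrightarrow> x * r \<in> I"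
proof -
  interpret ideal I "type_ring :: 'b ring" by fact
  show "0 \<in> I" using additive_subgroup.zero_closed[OF is_additive_subgroup] by simp
  show "\<And>x y. x \<in> I \<Longrightarrow> y \<in> I \<Longrightarrow> x + y \<in> I" using additive_subgroup.a_closed[OF is_additive_subgroup] by simp
  show "\<And>x. x \<in> I \<Longrightarrow> - x \<in> I" using additive_subgroup.a_inv_closed[OF is_additive_subgroup] by simp
  show "\<And>x r. x \<in> I \<Longrightarrow> r * x \<in> I" using I_l_closed by simp
  show "\<And>x r. x \<in> I \<Longrightarrow> x * r \<in> I" using I_r_closed by simp
qed

lemma rcos_T: "I +>\<^bsub>(type_ring :: 'b::comm_ring_1 ring)\<^esub> a = (\<lambda>h. h + a) ` I"
  by (auto simp: a_r_coset_def r_coset_def)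

lemma rcos_T_eq:
  assumes "ideal I (type_ring :: 'b::comm_ring_1 ring)"
  shows "(I +>\<^bsub>(type_ring :: 'b ring)\<^esub> a = I +>\<^bsub>(type_ring :: 'b ring)\<^esub> b) \<longleftrightarrow> a - b \<in> I"
proof
  assume "I +>\<^bsub>(type_ring :: 'b ring)\<^esub> a = I +>\<^bsub>(type_ring :: 'b ring)\<^esub> b"
  then have "a \<in> (\<lambda>h. h + b) ` I" using ideal_T(1)[OF assms] by (auto simp: rcos_T)
  then show "a - b \<in> I" by auto
next
  assume d: "a - b \<in> I"
  show "I +>\<^bsub>(type_ring :: 'b ring)\<^esub> a = I +>\<^bsub>(type_ring :: 'b ring)\<^esub> b"
    unfolding rcos_T
  proof (intro equalityI subsetI)
    fix x assume "x \<in> (\<lambda>h. h + a) ` I"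
    then obtain h where h: "h \<in> I" "x = h + a" by auto
    then have "h + (a - b) \<in> I" using d ideal_T(2)[OF assms] by auto
    then show "x \<in> (\<lambda>h. h + b) ` I" using h by (auto intro!: image_eqI[of _ _ "h + (a - b)"])
  next
    fix x assume "x \<in> (\<lambda>h. h + b) ` I"
    then obtain h where h: "h \<in> I" "x = h + b" by auto
    then have "h + - (a - b) \<in> I" using d ideal_T(2,3)[OF assms] by blast
    then show "x \<in> (\<lambda>h. h + a) ` I" using h by (auto intro!: image_eqI[of _ _ "h + - (a - b)"])
  qed
qed

lemma update_as_add:
  assumes "a \<notin> Poly_Mapping.keys f"
  shows "Poly_Mapping.update a b f = f + Poly_Mapping.single a b"
  using assms
  by (intro poly_mapping_eqI) (auto simp: lookup_update lookup_add lookup_single when_def not_in_keys_iff_lookup_eq_zero)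

lemma expand_finite_pm:
  fixes \<alpha> :: "'n::finite \<Rightarrow>\<^sub>0 nat"
  shows "\<alpha> = (\<Sum>j\<in>UNIV. Poly_Mapping.single j (Poly_Mapping.lookup \<alpha> j))"
proof (rule poly_mapping_eqI)
  fix k
  have "(\<Sum>j\<in>UNIV. Poly_Mapping.lookup (Poly_Mapping.single j (Poly_Mapping.lookup \<alpha> j)) k)
        = (\<Sum>j\<in>UNIV. if j = k then Poly_Mapping.lookup \<alpha> j else 0)"
    by (intro sum.cong) (auto simp: lookup_single when_def)
  also have "\<dots> = Poly_Mapping.lookup \<alpha> k" by simp
  finally show "Poly_Mapping.lookup \<alpha> k = Poly_Mapping.lookup (\<Sum>j\<in>UNIV. Poly_Mapping.single j (Poly_Mapping.lookup \<alpha> j)) k"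
    by (simp add: lookup_sum)
qed

lemma mpoly_generate:
  "generate_ring (type_ring :: ('n::finite, 'b::comm_ring_1) mpoly ring)
     (range mpoly_const \<union> range mpoly_var) = UNIV"
proof -
  let ?A = "type_ring :: ('n, 'b) mpoly ring"
  let ?G = "generate_ring ?A (range mpoly_const \<union> range mpoly_var)"
  have add: "p + q \<in> ?G" if "p \<in> ?G" "q \<in> ?G" for p q
    using generate_ring.eng_add[OF that] by simp
  have mul: "p * q \<in> ?G" if "p \<in> ?G" "q \<in> ?G" for p q
    using generate_ring.eng_mult[OF that] by simp
  have one: "1 \<in> ?G" using generate_ring.one[of ?A] by simp
  have var: "mpoly_var j \<in> ?G" for j by (rule generate_ring.incl) auto
  have cst: "mpoly_const c \<in> ?G" for c by (rule generate_ring.incl) auto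
  have pw: "Poly_Mapping.single (Poly_Mapping.single j n) (1::'b) \<in> ?G" for j n
  proof (induct n)
    case 0 then show ?case using one by simp
  next
    case (Suc n)
    have "Poly_Mapping.single (Poly_Mapping.single j (Suc n)) (1::'b)
        = Poly_Mapping.single (Poly_Mapping.single j n) 1 * mpoly_var j"
      by (simp add: mpoly_var_def mult_single single_add[symmetric])
    then show ?case using mul[OF Suc var] by simp
  qed
  have sm: "Poly_Mapping.single (\<Sum>j\<in>S. \<beta> j) (1::'b) \<in> ?G"
    if "finite S" "\<And>j. Poly_Mapping.single (\<beta> j) (1::'b) \<in> ?G" for S and \<beta> :: "'n \<Rightarrow> ('n \<Rightarrow>\<^sub>0 nat)"
    using that(1)
  proof (induct S rule: finite_induct)
    case empty then show ?case using one by simp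
  next
    case (insert j S)
    have "Poly_Mapping.single (\<Sum>j\<in>insert j S. \<beta> j) (1::'b)
        = Poly_Mapping.single (\<beta> j) 1 * Poly_Mapping.single (\<Sum>j\<in>S. \<beta> j) 1"
      using insert by (simp add: mult_single)
    then show ?case using mul[OF that(2) insert(3)] by simp
  qed
  have mono: "Poly_Mapping.single \<alpha> (1::'b) \<in> ?G" for \<alpha> :: "'n \<Rightarrow>\<^sub>0 nat"
    using sm[of UNIV "\<lambda>j. Poly_Mapping.single j (Poly_Mapping.lookup \<alpha> j)"] pw expand_finite_pm[of \<alpha>]
    by simp
  have monc: "Poly_Mapping.single \<alpha> c \<in> ?G" for \<alpha> c
  proof -
    have "Poly_Mapping.single \<alpha> c = mpoly_const c * Poly_Mapping.single \<alpha> (1::'b)"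
      by (simp add: mpoly_const_def mult_single)
    then show ?thesis using mul[OF cst mono] by simp
  qed
  have "p \<in> ?G" for p :: "('n, 'b) mpoly"
  proof (induct p rule: update_induct)
    case const
    have "mpoly_const 0 = (0 :: ('n, 'b) mpoly)" by (simp add: mpoly_const_def)
    then show ?case using cst[of 0] by metis
  next
    case (update f a b)
    then show ?case using add[OF update(3) monc] by (simp add: update_as_add)
  qed
  then show ?thesis by auto
qed

lemma ring_hom_a_inv':
  assumes R: "ring R" and S: "ring S" and h: "h \<in> ring_hom R S" and x: "x \<in> carrier R"
  shows "h (\<ominus>\<^bsub>R\<^esub> x) = \<ominus>\<^bsub>S\<^esub> h x"
proof -
  interpret R: ring R by fact
  interpret S: ring S by fact
  have "h (\<ominus>\<^bsub>R\<^esub> x) \<oplus>\<^bsub>S\<^esub> h x = \<zero>\<^bsub>S\<^esub>"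
    using ring_hom_add[OF h, of "\<ominus>\<^bsub>R\<^esub> x" x] ring_hom_zero[OF h R S] x R.l_neg R.a_inv_closed by metis
  then show ?thesis
    using S.minus_equality x h ring_hom_closed R.a_inv_closed by metis
qed

lemma set_add_T: "x \<in> I <+>\<^bsub>(type_ring :: 'b::comm_ring_1 ring)\<^esub> K \<longleftrightarrow> (\<exists>a\<in>I. \<exists>b\<in>K. x = a + b)"
  by (auto simp: set_add_def set_mult_def)

lemma Quot_carrier_T:
  "carrier ((type_ring :: 'b::comm_ring_1 ring) Quot I) = range (\<lambda>a. I +>\<^bsub>(type_ring :: 'b ring)\<^esub> a)"
  by (auto simp: FactRing_def A_RCOSETS_def RCOSETS_def a_r_coset_def)

lemma Quot_ops_T:
  assumes "ideal I (type_ring :: 'b::comm_ring_1 ring)"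
  shows "(I +>\<^bsub>(type_ring :: 'b ring)\<^esub> a) \<oplus>\<^bsub>(type_ring :: 'b ring) Quot I\<^esub> (I +>\<^bsub>(type_ring :: 'b ring)\<^esub> b) = I +>\<^bsub>(type_ring :: 'b ring)\<^esub> (a + b)"
    and "(I +>\<^bsub>(type_ring :: 'b ring)\<^esub> a) \<otimes>\<^bsub>(type_ring :: 'b ring) Quot I\<^esub> (I +>\<^bsub>(type_ring :: 'b ring)\<^esub> b) = I +>\<^bsub>(type_ring :: 'b ring)\<^esub> (a * b)"
    and "\<one>\<^bsub>(type_ring :: 'b ring) Quot I\<^esub> = I +>\<^bsub>(type_ring :: 'b ring)\<^esub> 1"
    and "\<zero>\<^bsub>(type_ring :: 'b ring) Quot I\<^esub> = I +>\<^bsub>(type_ring :: 'b ring)\<^esub> 0"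
    and "\<ominus>\<^bsub>(type_ring :: 'b ring) Quot I\<^esub> (I +>\<^bsub>(type_ring :: 'b ring)\<^esub> a) = I +>\<^bsub>(type_ring :: 'b ring)\<^esub> (- a)"
proof -
  interpret ideal I "type_ring :: 'b ring" by fact
  have h: "((+>\<^bsub>(type_ring :: 'b ring)\<^esub>) I) \<in> ring_hom (type_ring :: 'b ring) ((type_ring :: 'b ring) Quot I)"
    by (rule rcos_ring_hom)
  have hr: "ring_hom_ring (type_ring :: 'b ring) ((type_ring :: 'b ring) Quot I) ((+>\<^bsub>(type_ring :: 'b ring)\<^esub>) I)"
    by (rule rcos_ring_hom_ring)
  show "(I +>\<^bsub>(type_ring :: 'b ring)\<^esub> a) \<oplus>\<^bsub>(type_ring :: 'b ring) Quot I\<^esub> (I +>\<^bsub>(type_ring :: 'b ring)\<^esub> b) = I +>\<^bsub>(type_ring :: 'b ring)\<^esub> (a + b)"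
    using ring_hom_add[OF h, of a b] by simp
  show "(I +>\<^bsub>(type_ring :: 'b ring)\<^esub> a) \<otimes>\<^bsub>(type_ring :: 'b ring) Quot I\<^esub> (I +>\<^bsub>(type_ring :: 'b ring)\<^esub> b) = I +>\<^bsub>(type_ring :: 'b ring)\<^esub> (a * b)"
    using ring_hom_mult[OF h, of a b] by simp
  show "\<one>\<^bsub>(type_ring :: 'b ring) Quot I\<^esub> = I +>\<^bsub>(type_ring :: 'b ring)\<^esub> 1"
    using ring_hom_one[OF h] by simp
  show "\<zero>\<^bsub>(type_ring :: 'b ring) Quot I\<^esub> = I +>\<^bsub>(type_ring :: 'b ring)\<^esub> 0"
    using ring_hom_zero[OF h ring_axioms quotient_is_ring] by simp
  show "\<ominus>\<^bsub>(type_ring :: 'b ring) Quot I\<^esub> (I +>\<^bsub>(type_ring :: 'b ring)\<^esub> a) = I +>\<^bsub>(type_ring :: 'b ring)\<^esub> (- a)"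
    using ring_hom_a_inv'[OF ring_axioms quotient_is_ring h, of a] by simp
qed

lemma pi_T:
  assumes I: "ideal I (type_ring :: 'b::comm_ring_1 ring)"
    and hom: "\<pi> \<in> ring_hom (type_ring :: 'c::comm_ring_1 ring) ((type_ring :: 'b ring) Quot I)"
  shows "\<pi> f = I +>\<^bsub>(type_ring :: 'b ring)\<^esub> a \<Longrightarrow> \<pi> g = I +>\<^bsub>(type_ring :: 'b ring)\<^esub> b \<Longrightarrow> \<pi> (f + g) = I +>\<^bsub>(type_ring :: 'b ring)\<^esub> (a + b)"
    and "\<pi> f = I +>\<^bsub>(type_ring :: 'b ring)\<^esub> a \<Longrightarrow> \<pi> g = I +>\<^bsub>(type_ring :: 'b ring)\<^esub> b \<Longrightarrow> \<pi> (f * g) = I +>\<^bsub>(type_ring :: 'b ring)\<^esub> (a * b)"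
    and "\<pi> 1 = I +>\<^bsub>(type_ring :: 'b ring)\<^esub> 1"
    and "\<pi> 0 = I +>\<^bsub>(type_ring :: 'b ring)\<^esub> 0"
proof -
  interpret ideal I "type_ring :: 'b ring" by fact
  have hr: "ring_hom_ring (type_ring :: 'c ring) ((type_ring :: 'b ring) Quot I) \<pi>"
    by (rule ring_hom_ringI2[OF cring.axioms(1)[OF cring_type_ring] quotient_is_ring hom])
  show "\<pi> f = I +>\<^bsub>(type_ring :: 'b ring)\<^esub> a \<Longrightarrow> \<pi> g = I +>\<^bsub>(type_ring :: 'b ring)\<^esub> b \<Longrightarrow> \<pi> (f + g) = I +>\<^bsub>(type_ring :: 'b ring)\<^esub> (a + b)"
    using ring_hom_add[OF hom, of f g] Quot_ops_T[OF I] by simp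
  show "\<pi> f = I +>\<^bsub>(type_ring :: 'b ring)\<^esub> a \<Longrightarrow> \<pi> g = I +>\<^bsub>(type_ring :: 'b ring)\<^esub> b \<Longrightarrow> \<pi> (f * g) = I +>\<^bsub>(type_ring :: 'b ring)\<^esub> (a * b)"
    using ring_hom_mult[OF hom, of f g] Quot_ops_T[OF I] by simp
  show "\<pi> 1 = I +>\<^bsub>(type_ring :: 'b ring)\<^esub> 1"
    using ring_hom_one[OF hom] Quot_ops_T[OF I] by simp
  show "\<pi> 0 = I +>\<^bsub>(type_ring :: 'b ring)\<^esub> 0"
    using ring_hom_zero[OF hom cring.axioms(1)[OF cring_type_ring] quotient_is_ring] Quot_ops_T[OF I] by simp
qed

lemma pi_sum_T:
  assumes I: "ideal I (type_ring :: 'b::comm_ring_1 ring)"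
    and hom: "\<pi> \<in> ring_hom (type_ring :: 'c::comm_ring_1 ring) ((type_ring :: 'b ring) Quot I)"
    and fin: "finite S"
    and g: "\<And>j. \<pi> (g j) = I +>\<^bsub>(type_ring :: 'b ring)\<^esub> c j"
  shows "\<pi> (\<Sum>j\<in>S. g j) = I +>\<^bsub>(type_ring :: 'b ring)\<^esub> (\<Sum>j\<in>S. c j)"
  using fin
proof (induct S rule: finite_induct)
  case empty then show ?case using pi_T(4)[OF I hom] by simp
next
  case (insert j S)
  then show ?case using pi_T(1)[OF I hom g insert(3)] by simp
qed

lemma quot_proj_rcos:
  assumes I: "ideal I (type_ring :: 'b::comm_ring_1 ring)" and K: "ideal K (type_ring :: 'b ring)"
    and sub: "I \<subseteq> K"
  shows "quot_proj (type_ring :: 'b ring) K (I +>\<^bsub>(type_ring :: 'b ring)\<^esub> a) = K +>\<^bsub>(type_ring :: 'b ring)\<^esub> a"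
proof -
  have ex: "a \<in> I +>\<^bsub>(type_ring :: 'b ring)\<^esub> a" using ideal_T(1)[OF I] by (force simp: rcos_T)
  define x where "x = (SOME x. x \<in> I +>\<^bsub>(type_ring :: 'b ring)\<^esub> a)"
  have "x \<in> I +>\<^bsub>(type_ring :: 'b ring)\<^esub> a" unfolding x_def using ex by (rule someI)
  then obtain h where "h \<in> I" "x = h + a" by (auto simp: rcos_T)
  then have "x - a \<in> K" using sub by auto
  then show ?thesis unfolding quot_proj_def x_def[symmetric] using rcos_T_eq[OF K] by simp
qed

lemma quot_proj_hom:
  assumes I: "ideal I (type_ring :: 'b::comm_ring_1 ring)" and K: "ideal K (type_ring :: 'b ring)"
    and sub: "I \<subseteq> K"
  shows "quot_proj (type_ring :: 'b ring) K \<in> ring_hom ((type_ring :: 'b ring) Quot I) ((type_ring :: 'b ring) Quot K)"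
proof (rule ring_hom_memI)
  fix x assume "x \<in> carrier ((type_ring :: 'b ring) Quot I)"
  then obtain a where "x = I +>\<^bsub>(type_ring :: 'b ring)\<^esub> a" by (auto simp: Quot_carrier_T)
  then show "quot_proj (type_ring :: 'b ring) K x \<in> carrier ((type_ring :: 'b ring) Quot K)"
    using quot_proj_rcos[OF I K sub] by (auto simp: Quot_carrier_T)
next
  fix x y assume "x \<in> carrier ((type_ring :: 'b ring) Quot I)" "y \<in> carrier ((type_ring :: 'b ring) Quot I)"
  then obtain a b where ab: "x = I +>\<^bsub>(type_ring :: 'b ring)\<^esub> a" "y = I +>\<^bsub>(type_ring :: 'b ring)\<^esub> b"
    by (auto simp: Quot_carrier_T)
  show "quot_proj (type_ring :: 'b ring) K (x \<otimes>\<^bsub>(type_ring :: 'b ring) Quot I\<^esub> y) =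
        quot_proj (type_ring :: 'b ring) K x \<otimes>\<^bsub>(type_ring :: 'b ring) Quot K\<^esub> quot_proj (type_ring :: 'b ring) K y"
    using ab by (simp add: Quot_ops_T[OF I] Quot_ops_T[OF K] quot_proj_rcos[OF I K sub])
  show "quot_proj (type_ring :: 'b ring) K (x \<oplus>\<^bsub>(type_ring :: 'b ring) Quot I\<^esub> y) =
        quot_proj (type_ring :: 'b ring) K x \<oplus>\<^bsub>(type_ring :: 'b ring) Quot K\<^esub> quot_proj (type_ring :: 'b ring) K y"
    using ab by (simp add: Quot_ops_T[OF I] Quot_ops_T[OF K] quot_proj_rcos[OF I K sub])
next
  show "quot_proj (type_ring :: 'b ring) K \<one>\<^bsub>(type_ring :: 'b ring) Quot I\<^esub> = \<one>\<^bsub>(type_ring :: 'b ring) Quot K\<^esub>"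
    by (simp add: Quot_ops_T[OF I] Quot_ops_T[OF K] quot_proj_rcos[OF I K sub])
qed

lemma hom_agree_generate:
  assumes A: "ring A" and B: "ring B" and h1: "h1 \<in> ring_hom A B" and h2: "h2 \<in> ring_hom A B"
    and H: "H \<subseteq> carrier A" and eq: "\<And>x. x \<in> H \<Longrightarrow> h1 x = h2 x"
    and x: "x \<in> generate_ring A H"
  shows "h1 x = h2 x"
  using x
proof (induct rule: generate_ring.induct)
  case one then show ?case using ring_hom_one[OF h1] ring_hom_one[OF h2] by simp
next
  case (incl h) then show ?case using eq by simp
next
  case (a_inv h)
  have "h \<in> carrier A" using ring.generate_ring_in_carrier[OF A H a_inv(1)] .
  then show ?case using a_inv(2) ring_hom_a_inv'[OF A B h1]
      ring_hom_a_inv'[OF A B h2] by metis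
next
  case (eng_add a b)
  have "a \<in> carrier A" "b \<in> carrier A" using ring.generate_ring_in_carrier[OF A H] eng_add by auto
  then show ?case using eng_add ring_hom_add[OF h1] ring_hom_add[OF h2] by metis
next
  case (eng_mult a b)
  have "a \<in> carrier A" "b \<in> carrier A" using ring.generate_ring_in_carrier[OF A H] eng_mult by auto
  then show ?case using eng_mult ring_hom_mult[OF h1] ring_hom_mult[OF h2] by metis
qed

lemma hom_image_generate:
  assumes A: "ring A" and B: "ring B" and h: "h \<in> ring_hom A B"
    and H: "H \<subseteq> carrier A"
    and x: "x \<in> generate_ring A H"
  shows "h x \<in> generate_ring B (h ` H)"
  using x
proof (induct rule: generate_ring.induct)
  case one then show ?case using ring_hom_one[OF h] generate_ring.one by metis
next
  case (incl a) then show ?case by (simp add: generate_ring.incl)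
next
  case (a_inv a)
  have "a \<in> carrier A" using ring.generate_ring_in_carrier[OF A H a_inv(1)] .
  then show ?case using a_inv(2) ring_hom_a_inv'[OF A B h]
      generate_ring.a_inv by metis
next
  case (eng_add a b)
  have "a \<in> carrier A" "b \<in> carrier A" using ring.generate_ring_in_carrier[OF A H] eng_add by auto
  then show ?case using eng_add ring_hom_add[OF h] generate_ring.eng_add by metis
next
  case (eng_mult a b)
  have "a \<in> carrier A" "b \<in> carrier A" using ring.generate_ring_in_carrier[OF A H] eng_mult by auto
  then show ?case using eng_mult ring_hom_mult[OF h] generate_ring.eng_mult by metis
qed

lemma genideal_range_T:
  fixes k :: "'n::finite \<Rightarrow> 'b::comm_ring_1"
  assumes "x \<in> genideal (type_ring :: 'b ring) (range k)"
  shows "\<exists>r. x = (\<Sum>j\<in>UNIV. r j * k j)"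
proof -
  let ?T = "type_ring :: 'b ring"
  interpret cring ?T by (rule cring_type_ring)
  define L where "L = {x. \<exists>r. x = (\<Sum>j\<in>UNIV. r j * k j)}"
  have add: "x + y \<in> L" if xL: "x \<in> L" and yL: "y \<in> L" for x y
  proof -
    obtain r where "x = (\<Sum>j\<in>UNIV. r j * k j)" using xL unfolding L_def by blast
    moreover obtain s where "y = (\<Sum>j\<in>UNIV. s j * k j)" using yL unfolding L_def by blast
    ultimately have "x + y = (\<Sum>j\<in>UNIV. (r j + s j) * k j)" by (simp add: sum.distrib distrib_right)
    then show ?thesis by (auto simp: L_def)
  qed
  have mul: "c * x \<in> L" if xL: "x \<in> L" for x c
  proof -
    obtain r where "x = (\<Sum>j\<in>UNIV. r j * k j)" using xL unfolding L_def by blast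
    then have "c * x = (\<Sum>j\<in>UNIV. (c * r j) * k j)" by (simp add: sum_distrib_left mult.assoc)
    then show ?thesis by (auto simp: L_def)
  qed
  have neg: "- x \<in> L" if "x \<in> L" for x using mul[OF that, of "-1"] by simp
  have zero: "0 \<in> L" unfolding L_def by (rule CollectI, rule exI[of _ "\<lambda>_. 0"]) simp
  have gen: "range k \<subseteq> L"
  proof
    fix y assume "y \<in> range k"
    then obtain i where "y = k i" by auto
    moreover have "(\<Sum>j\<in>UNIV. (if j = i then 1 else 0) * k j) = (\<Sum>j\<in>UNIV. if j = i then k j else 0)"
      by (rule sum.cong) auto
    ultimately have "y = (\<Sum>j\<in>UNIV. (if j = i then 1 else 0) * k j)" by simp
    then show "y \<in> L" by (auto simp: L_def)
  qed
  have "ideal L ?T"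
  proof (rule idealI)
    show "ring ?T" by (rule ring_axioms)
    show "subgroup L (add_monoid ?T)"
    proof (rule group.subgroupI[OF a_group])
      show "L \<subseteq> carrier (add_monoid ?T)" by simp
      show "L \<noteq> {}" using zero by auto
      show "inv\<^bsub>add_monoid ?T\<^esub> a \<in> L" if "a \<in> L" for a
        using neg[OF that] type_ring_a_inv[of a] unfolding a_inv_def by simp
      show "a \<otimes>\<^bsub>add_monoid ?T\<^esub> b \<in> L" if "a \<in> L" "b \<in> L" for a b
        using add[OF that] by simp
    qed
    show "\<And>a x. a \<in> L \<Longrightarrow> x \<in> carrier ?T \<Longrightarrow> x \<otimes>\<^bsub>?T\<^esub> a \<in> L" using mul by simp
    show "\<And>a x. a \<in> L \<Longrightarrow> x \<in> carrier ?T \<Longrightarrow> a \<otimes>\<^bsub>?T\<^esub> x \<in> L" using mul by (simp add: mult.commute)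
  qed
  then have "genideal ?T (range k) \<subseteq> L" using genideal_minimal gen by blast
  then show ?thesis using assms by (auto simp: L_def)
qed

theorem lemma2p6:
  fixes I1 I2 I3 :: "'a::comm_ring_1 set"
    and k :: "'n::finite \<Rightarrow> 'a"
    and \<pi>1 \<pi>2 :: "('n, 'a) mpoly \<Rightarrow> 'a set"
    and J :: "'a set"
  assumes noeth: "noetherian_ring (type_ring :: 'a ring)"
    and I1: "ideal I1 (type_ring :: 'a ring)"
    and I2: "ideal I2 (type_ring :: 'a ring)"
    and I3: "ideal I3 (type_ring :: 'a ring)"
    and J: "J = (I1 <+>\<^bsub>(type_ring :: 'a ring)\<^esub> I2) <+>\<^bsub>(type_ring :: 'a ring)\<^esub> I3"
    and gen: "I3 = genideal (type_ring :: 'a ring) (range k)"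
    and hom1: "\<pi>1 \<in> ring_hom (type_ring :: ('n, 'a) mpoly ring) ((type_ring :: 'a ring) Quot I1)"
    and alg1: "\<And>r. \<pi>1 (mpoly_const r) = I1 +>\<^bsub>(type_ring :: 'a ring)\<^esub> r"
    and var1: "\<And>j. \<pi>1 (mpoly_var j) = I1 +>\<^bsub>(type_ring :: 'a ring)\<^esub> k j"
    and hom2: "\<pi>2 \<in> ring_hom (type_ring :: ('n, 'a) mpoly ring) ((type_ring :: 'a ring) Quot I2)"
    and alg2: "\<And>r. \<pi>2 (mpoly_const r) = I2 +>\<^bsub>(type_ring :: 'a ring)\<^esub> r"
    and var2: "\<And>j. \<pi>2 (mpoly_var j) = I2 +>\<^bsub>(type_ring :: 'a ring)\<^esub> 0"
  shows "(fiber_product ((type_ring :: 'a ring) Quot I1) ((type_ring :: 'a ring) Quot I2)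
           (quot_proj (type_ring :: 'a ring) J) (quot_proj (type_ring :: 'a ring) J)
         \<simeq> ((type_ring :: ('n, 'a) mpoly ring) Quot
              (a_kernel (type_ring :: ('n, 'a) mpoly ring) ((type_ring :: 'a ring) Quot I1) \<pi>1
               \<inter> a_kernel (type_ring :: ('n, 'a) mpoly ring) ((type_ring :: 'a ring) Quot I2) \<pi>2)))
    \<and> fg_algebra (type_ring :: 'a ring)
           (fiber_product ((type_ring :: 'a ring) Quot I1) ((type_ring :: 'a ring) Quot I2)
              (quot_proj (type_ring :: 'a ring) J) (quot_proj (type_ring :: 'a ring) J))
           (\<lambda>r. (I1 +>\<^bsub>(type_ring :: 'a ring)\<^esub> r, I2 +>\<^bsub>(type_ring :: 'a ring)\<^esub> r))"
proof -
  let ?T = "type_ring :: 'a ring"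
  let ?A = "type_ring :: ('n, 'a) mpoly ring"
  let ?Q1 = "?T Quot I1"
  let ?Q2 = "?T Quot I2"
  let ?QJ = "?T Quot J"
  let ?FP = "fiber_product ?Q1 ?Q2 (quot_proj ?T J) (quot_proj ?T J)"
  let ?H = "range mpoly_const \<union> range mpoly_var :: ('n, 'a) mpoly set"
  interpret T: cring ?T by (rule cring_type_ring)
  have ringT: "ring ?T" by (rule T.ring_axioms)
  have ringA: "ring ?A" by (rule cring.axioms(1)[OF cring_type_ring])
  have ringQ1: "ring ?Q1" by (rule ideal.quotient_is_ring[OF I1])
  have ringQ2: "ring ?Q2" by (rule ideal.quotient_is_ring[OF I2])
  have Jid: "ideal J ?T" unfolding J by (intro T.add_ideals I1 I2 I3)
  have sadd: "a + b \<in> set_add (type_ring :: 'a ring) U V" if "a \<in> U" "b \<in> V" for a b :: 'a and U V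
    using that by (auto simp: set_add_T)
  have sub1: "I1 \<subseteq> J"
  proof
    fix x assume "x \<in> I1"
    then have "(x + 0) + 0 \<in> J" unfolding J
      using sadd ideal_T(1)[OF I2] ideal_T(1)[OF I3] by blast
    then show "x \<in> J" by simp
  qed
  have sub2: "I2 \<subseteq> J"
  proof
    fix x assume "x \<in> I2"
    then have "(0 + x) + 0 \<in> J" unfolding J
      using sadd ideal_T(1)[OF I1] ideal_T(1)[OF I3] by blast
    then show "x \<in> J" by simp
  qed
  have sub3: "I3 \<subseteq> J"
  proof
    fix x assume "x \<in> I3"
    then have "(0 + 0) + x \<in> J" unfolding J
      using sadd ideal_T(1)[OF I1] ideal_T(1)[OF I2] by blast
    then show "x \<in> J" by simp
  qed
  have kJ: "k j \<in> J" for j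
  proof -
    have "range k \<subseteq> genideal ?T (range k)" by (rule T.genideal_self) simp
    then show ?thesis using gen sub3 by auto
  qed
  define \<psi> where "\<psi> = (\<lambda>f. (\<pi>1 f, \<pi>2 f))"
  define P where "P = RDirProd ?Q1 ?Q2"
  have ringP: "ring P" unfolding P_def by (rule RDirProd_ring[OF ringQ1 ringQ2])
  have \<psi>hom: "\<psi> \<in> ring_hom ?A P"
  proof -
    have "(\<lambda>(r, s). (\<pi>1 r, \<pi>2 s)) \<circ> (\<lambda>a. (a, a)) \<in> ring_hom ?A P"
      unfolding P_def by (rule ring_hom_trans[OF RDirProd_hom1 RDirProd_hom3[OF hom1 hom2]])
    then show ?thesis by (simp add: \<psi>_def comp_def)
  qed
  have hrP: "ring_hom_ring ?A P \<psi>" by (rule ring_hom_ringI2[OF ringA ringP \<psi>hom])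
  have agree: "quot_proj ?T J (\<pi>1 f) = quot_proj ?T J (\<pi>2 f)" for f
  proof -
    have h1: "quot_proj ?T J \<circ> \<pi>1 \<in> ring_hom ?A ?QJ"
      by (rule ring_hom_trans[OF hom1 quot_proj_hom[OF I1 Jid sub1]])
    have h2: "quot_proj ?T J \<circ> \<pi>2 \<in> ring_hom ?A ?QJ"
      by (rule ring_hom_trans[OF hom2 quot_proj_hom[OF I2 Jid sub2]])
    have eq: "(quot_proj ?T J \<circ> \<pi>1) x = (quot_proj ?T J \<circ> \<pi>2) x" if "x \<in> ?H" for x
      using that
    proof
      assume "x \<in> range mpoly_const"
      then obtain r where "x = mpoly_const r" by auto
      then show ?thesis by (simp add: alg1 alg2 quot_proj_rcos[OF I1 Jid sub1] quot_proj_rcos[OF I2 Jid sub2])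
    next
      assume "x \<in> range mpoly_var"
      then obtain j where "x = mpoly_var j" by auto
      then show ?thesis using kJ[of j]
        by (simp add: var1 var2 quot_proj_rcos[OF I1 Jid sub1] quot_proj_rcos[OF I2 Jid sub2] rcos_T_eq[OF Jid])
    qed
    have Hsub: "?H \<subseteq> carrier ?A" by simp
    have fgen: "f \<in> generate_ring ?A ?H" using mpoly_generate by blast
    have "(quot_proj ?T J \<circ> \<pi>1) f = (quot_proj ?T J \<circ> \<pi>2) f"
      by (rule hom_agree_generate[OF ringA ideal.quotient_is_ring[OF Jid] h1 h2 Hsub eq fgen])
    then show ?thesis by simp
  qed
  have carrFP: "carrier ?FP = \<psi> ` carrier ?A"
  proof (intro equalityI subsetI)
    fix z assume "z \<in> \<psi> ` carrier ?A"
    then obtain f where "z = \<psi> f" by auto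
    then show "z \<in> carrier ?FP"
      using agree[of f] ring_hom_closed[OF hom1, of f] ring_hom_closed[OF hom2, of f]
      by (simp add: fiber_product_def RDirProd_carrier \<psi>_def)
  next
    fix z assume z: "z \<in> carrier ?FP"
    then obtain Xa Ya where XY: "z = (Xa, Ya)" "Xa \<in> carrier ?Q1" "Ya \<in> carrier ?Q2"
      "quot_proj ?T J Xa = quot_proj ?T J Ya"
      by (auto simp: fiber_product_def RDirProd_carrier)
    then obtain a b where ab: "Xa = I1 +>\<^bsub>?T\<^esub> a" "Ya = I2 +>\<^bsub>?T\<^esub> b" by (auto simp: Quot_carrier_T)
    have "J +>\<^bsub>?T\<^esub> a = J +>\<^bsub>?T\<^esub> b"
      using XY(4) ab quot_proj_rcos[OF I1 Jid sub1] quot_proj_rcos[OF I2 Jid sub2] by simp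
    then have "a - b \<in> J" using rcos_T_eq[OF Jid] by simp
    then have "\<exists>u\<in>I1 <+>\<^bsub>?T\<^esub> I2. \<exists>i3\<in>I3. a - b = u + i3"
      unfolding J by (simp only: set_add_T)
    then obtain u i3 where u: "u \<in> I1 <+>\<^bsub>?T\<^esub> I2" "i3 \<in> I3" "a - b = u + i3"
      by (elim bexE)
    from u(1) have "\<exists>i1\<in>I1. \<exists>i2\<in>I2. u = i1 + i2" by (simp only: set_add_T)
    then obtain i1 i2 where "i1 \<in> I1" "i2 \<in> I2" "u = i1 + i2"
      by (elim bexE)
    then have i: "i1 \<in> I1" "i2 \<in> I2" "i3 \<in> I3" "a - b = i1 + i2 + i3" using u by auto
    obtain r where r: "i3 = (\<Sum>j\<in>UNIV. r j * k j)" using genideal_range_T[of i3 k] i(3) gen by auto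
    define f where "f = mpoly_const (b + i2) + (\<Sum>j\<in>UNIV. mpoly_const (r j) * mpoly_var j)"
    have p1s: "\<pi>1 (\<Sum>j\<in>UNIV. mpoly_const (r j) * mpoly_var j) = I1 +>\<^bsub>?T\<^esub> (\<Sum>j\<in>UNIV. r j * k j)"
      by (rule pi_sum_T[OF I1 hom1]) (simp_all add: pi_T(2)[OF I1 hom1 alg1 var1])
    have p2s: "\<pi>2 (\<Sum>j\<in>UNIV. mpoly_const (r j) * mpoly_var j) = I2 +>\<^bsub>?T\<^esub> (\<Sum>j\<in>UNIV. r j * 0)"
      by (rule pi_sum_T[OF I2 hom2]) (simp_all add: pi_T(2)[OF I2 hom2 alg2 var2])
    have f1: "\<pi>1 f = I1 +>\<^bsub>?T\<^esub> (b + i2 + i3)"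
      unfolding f_def r by (rule pi_T(1)[OF I1 hom1 alg1 p1s])
    have f2: "\<pi>2 f = I2 +>\<^bsub>?T\<^esub> (b + i2 + 0)"
      unfolding f_def using pi_T(1)[OF I2 hom2 alg2 p2s] by simp
    have "b + i2 + i3 - a = - i1" using i(4) by (simp add: algebra_simps)
    then have "I1 +>\<^bsub>?T\<^esub> (b + i2 + i3) = Xa"
      using ab rcos_T_eq[OF I1] ideal_T(3)[OF I1 i(1)] by simp
    moreover have "I2 +>\<^bsub>?T\<^esub> (b + i2 + 0) = Ya"
      using ab rcos_T_eq[OF I2] i(2) by simp
    ultimately have "\<psi> f = z" using f1 f2 XY(1) by (simp add: \<psi>_def)
    then show "z \<in> \<psi> ` carrier ?A" by auto
  qed
  have FPeq: "?FP = P\<lparr>carrier := \<psi> ` carrier ?A\<rparr>"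
    using carrFP by (simp add: fiber_product_def P_def)
  have zeroP: "\<zero>\<^bsub>P\<^esub> = (\<zero>\<^bsub>?Q1\<^esub>, \<zero>\<^bsub>?Q2\<^esub>)"
    by (simp add: P_def RDirProd_def DirProd_def monoid.defs)
  have ker: "a_kernel ?A P \<psi> = a_kernel ?A ?Q1 \<pi>1 \<inter> a_kernel ?A ?Q2 \<pi>2"
    by (auto simp: a_kernel_def' zeroP \<psi>_def)
  have iso1: "?A Quot (a_kernel ?A P \<psi>) \<simeq> ?FP"
    using ring_hom_ring.FactRing_iso_set_aux[OF hrP] FPeq unfolding is_ring_iso_def by auto
  have ringK: "ring (?A Quot (a_kernel ?A P \<psi>))"
    by (rule ideal.quotient_is_ring[OF ring_hom_ring.kernel_is_ideal[OF hrP]])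
  have part1: "?FP \<simeq> ?A Quot (a_kernel ?A ?Q1 \<pi>1 \<inter> a_kernel ?A ?Q2 \<pi>2)"
    using ring_iso_sym[OF ringK iso1] ker by simp
  have ringFP: "ring ?FP"
    unfolding FPeq
    by (rule ring.subring_is_ring[OF ringP ring_hom_ring.img_is_subring[OF hrP ring.carrier_is_subring[OF ringA]]])
  have \<psi>homFP: "\<psi> \<in> ring_hom ?A ?FP"
    using \<psi>hom unfolding FPeq ring_hom_def by auto
  have part2: "fg_algebra ?T ?FP (\<lambda>r. (I1 +>\<^bsub>?T\<^esub> r, I2 +>\<^bsub>?T\<^esub> r))"
    unfolding fg_algebra_def
  proof (intro exI conjI)
    let ?F = "range (\<lambda>j. \<psi> (mpoly_var j))"
    show "finite ?F" by simp
    show "?F \<subseteq> carrier ?FP" using carrFP by auto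
    have phi: "(\<lambda>r. (I1 +>\<^bsub>?T\<^esub> r, I2 +>\<^bsub>?T\<^esub> r)) ` carrier ?T \<union> ?F = \<psi> ` ?H"
    proof (intro equalityI subsetI)
      fix z assume "z \<in> (\<lambda>r. (I1 +>\<^bsub>?T\<^esub> r, I2 +>\<^bsub>?T\<^esub> r)) ` carrier ?T \<union> ?F"
      then show "z \<in> \<psi> ` ?H"
      proof
        assume "z \<in> (\<lambda>r. (I1 +>\<^bsub>?T\<^esub> r, I2 +>\<^bsub>?T\<^esub> r)) ` carrier ?T"
        then obtain r where "z = (I1 +>\<^bsub>?T\<^esub> r, I2 +>\<^bsub>?T\<^esub> r)" by auto
        then have "z = \<psi> (mpoly_const r)" by (simp add: \<psi>_def alg1 alg2)
        then show ?thesis by blast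
      next
        assume "z \<in> ?F"
        then show ?thesis by blast
      qed
    next
      fix z assume "z \<in> \<psi> ` ?H"
      then obtain x where x: "x \<in> ?H" "z = \<psi> x" by blast
      from x(1) show "z \<in> (\<lambda>r. (I1 +>\<^bsub>?T\<^esub> r, I2 +>\<^bsub>?T\<^esub> r)) ` carrier ?T \<union> ?F"
      proof
        assume "x \<in> range mpoly_const"
        then obtain r where "x = mpoly_const r" by blast
        then have "z = (I1 +>\<^bsub>?T\<^esub> r, I2 +>\<^bsub>?T\<^esub> r)" using x(2) by (simp add: \<psi>_def alg1 alg2)
        then show ?thesis by simp
      next
        assume "x \<in> range mpoly_var"
        then show ?thesis using x(2) by blast
      qed
    qed
    have "generate_ring ?FP (\<psi> ` ?H) = carrier ?FP"
    proof
      show "generate_ring ?FP (\<psi> ` ?H) \<subseteq> carrier ?FP"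
        by (rule ring.generate_ring_incl[OF ringFP]) (use carrFP in auto)
      show "carrier ?FP \<subseteq> generate_ring ?FP (\<psi> ` ?H)"
      proof
        fix z assume "z \<in> carrier ?FP"
        then obtain f where "z = \<psi> f" using carrFP by auto
        then show "z \<in> generate_ring ?FP (\<psi> ` ?H)"
          using hom_image_generate[OF ringA ringFP \<psi>homFP, of ?H f] by (simp add: mpoly_generate)
      qed
    qed
    then show "generate_ring ?FP ((\<lambda>r. (I1 +>\<^bsub>?T\<^esub> r, I2 +>\<^bsub>?T\<^esub> r)) ` carrier ?T \<union> ?F) = carrier ?FP"
      using phi by simp
  qed
  show ?thesis using part1 part2 by simp
qed

end
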